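(* Let $F$ be a field and let $A$ and $B$ be unital locally matrix algebras over $F$. Then $A$ and $B$ are universally equivalent (as algebras in the signature of unital $F$-algebras, i.e. including the constant $1$) if and only if $\mathbf{n}(A)=\mathbf{n}(B)$.
   Context: All algebras are associative $F$-algebras with identity $1$. An algebra $A$ is a (unital) locally matrix algebra if every finite collection of elements $a_1,\ldots,a_s\in A$ lies in a subalgebra $B$ with $1_A\in B\subseteq A$ and $B\cong M_n(F)$ for some $n\ge1$. A Steinitz number is a formal product $\prod_{p\text{ prime}}p^{r_p}$ with $r_p\in\mathbb{N}\cup\{0,\infty\}$, ordered by divisibility ($v\mid u$ iff $u=vw$ for a Steinitz number $w$, where exponents add with $t+\infty=\infty$); least common multiples of arbitrary sets of positive integers exist in this lattice. For a unital locally matrix algebra $A$, $D(A)$ is the set of positive integers $n$ such that $A$ has a subalgebra $A'$ with $1_A\in A'$ and $A'\cong M_n(F)$, and $\mathbf{n}(A)$ is the least common multiple of $D(A)$. The signature of unital $F$-algebras consists of addition, multiplication, multiplication by each scalar $\alpha\in F$, and constants $0$ and $1$. The universal theory $UTh(A)$ is the set of universal closed formulas true in $A$; $A$ and $B$ are universally equivalent if $UTh(A)=UTh(B)$. *)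

theory Defs
  imports "HOL-Computational_Algebra.Primes" "HOL-Library.Extended_Nat"
          "Jordan_Normal_Form.Matrix"
begin

definition unital_algebra :: "('f::field \<Rightarrow> 'a::ring_1 \<Rightarrow> 'a) \<Rightarrow> bool" where
  "unital_algebra smul \<longleftrightarrow> Modules.module smul \<and>
     (\<forall>c x y. smul c (x * y) = smul c x * y \<and> smul c (x * y) = x * smul c y)"

definition matrix_subalg ::
  "('f::field \<Rightarrow> 'a::ring_1 \<Rightarrow> 'a) \<Rightarrow> nat \<Rightarrow> 'a set \<Rightarrow> bool" where
  "matrix_subalg smul n B \<longleftrightarrow> n \<ge> 1 \<and> 1 \<in> B \<and>
     (\<forall>x\<in>B. \<forall>y\<in>B. x + y \<in> B \<and> x * y \<in> B) \<and> (\<forall>c. \<forall>x\<in>B. smul c x \<in> B) \<and> 0 \<in> B \<and>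
     (\<exists>\<phi> :: 'f mat \<Rightarrow> 'a. bij_betw \<phi> (carrier_mat n n) B \<and>
        (\<forall>M\<in>carrier_mat n n. \<forall>N\<in>carrier_mat n n.
            \<phi> (M + N) = \<phi> M + \<phi> N \<and> \<phi> (M * N) = \<phi> M * \<phi> N) \<and>
        (\<forall>c. \<forall>M\<in>carrier_mat n n. \<phi> (c \<cdot>\<^sub>m M) = smul c (\<phi> M)) \<and>
        \<phi> (1\<^sub>m n) = 1)"

definition locally_matrix :: "('f::field \<Rightarrow> 'a::ring_1 \<Rightarrow> 'a) \<Rightarrow> bool" where
  "locally_matrix smul \<longleftrightarrow> unital_algebra smul \<and>
     (\<forall>S. finite S \<longrightarrow> (\<exists>n B. matrix_subalg smul n B \<and> S \<subseteq> B))"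

definition D_set :: "('f::field \<Rightarrow> 'a::ring_1 \<Rightarrow> 'a) \<Rightarrow> nat set" where
  "D_set smul = {n. n > 0 \<and> (\<exists>B. matrix_subalg smul n B)}"

text \<open>A Steinitz number is represented by its exponent function
p \<mapsto> r_p \<in> N \<union> {\<infinity>} on primes (set to 0 at non-primes).\<close>

definition steinitz :: "(nat \<Rightarrow> enat) set" where
  "steinitz = {r. \<forall>q. \<not> prime q \<longrightarrow> r q = 0}"

definition st_mult :: "(nat \<Rightarrow> enat) \<Rightarrow> (nat \<Rightarrow> enat) \<Rightarrow> (nat \<Rightarrow> enat)" where
  "st_mult u v = (\<lambda>p. u p + v p)"

definition st_dvd :: "(nat \<Rightarrow> enat) \<Rightarrow> (nat \<Rightarrow> enat) \<Rightarrow> bool" where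
  "st_dvd v u \<longleftrightarrow> (\<exists>w\<in>steinitz. u = st_mult v w)"

definition st_of_nat :: "nat \<Rightarrow> (nat \<Rightarrow> enat)" where
  "st_of_nat n = (\<lambda>p. if prime p then of_nat (multiplicity p n) else 0)"

definition st_lcm :: "nat set \<Rightarrow> (nat \<Rightarrow> enat)" where
  "st_lcm S = (THE u. u \<in> steinitz \<and> (\<forall>n\<in>S. st_dvd (st_of_nat n) u) \<and>
      (\<forall>v\<in>steinitz. (\<forall>n\<in>S. st_dvd (st_of_nat n) v) \<longrightarrow> st_dvd u v))"

definition steinitz_n :: "('f::field \<Rightarrow> 'a::ring_1 \<Rightarrow> 'a) \<Rightarrow> (nat \<Rightarrow> enat)" where
  "steinitz_n smul = st_lcm (D_set smul)"

datatype 'f tm = Var nat | Zero | One | Add "'f tm" "'f tm" | Mul "'f tm" "'f tm"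
  | Smul 'f "'f tm"

datatype 'f qf = Eq "'f tm" "'f tm" | FFalse | Neg "'f qf" | Conj "'f qf" "'f qf"
  | Disj "'f qf" "'f qf" | Imp "'f qf" "'f qf"

primrec tm_eval :: "('f \<Rightarrow> 'a::ring_1 \<Rightarrow> 'a) \<Rightarrow> (nat \<Rightarrow> 'a) \<Rightarrow> 'f tm \<Rightarrow> 'a" where
  "tm_eval s v (Var i) = v i"
| "tm_eval s v Zero = 0"
| "tm_eval s v One = 1"
| "tm_eval s v (Add t u) = tm_eval s v t + tm_eval s v u"
| "tm_eval s v (Mul t u) = tm_eval s v t * tm_eval s v u"
| "tm_eval s v (Smul c t) = s c (tm_eval s v t)"

primrec qf_sat :: "('f \<Rightarrow> 'a::ring_1 \<Rightarrow> 'a) \<Rightarrow> (nat \<Rightarrow> 'a) \<Rightarrow> 'f qf \<Rightarrow> bool" where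
  "qf_sat s v (Eq t u) = (tm_eval s v t = tm_eval s v u)"
| "qf_sat s v FFalse = False"
| "qf_sat s v (Neg f) = (\<not> qf_sat s v f)"
| "qf_sat s v (Conj f g) = (qf_sat s v f \<and> qf_sat s v g)"
| "qf_sat s v (Disj f g) = (qf_sat s v f \<or> qf_sat s v g)"
| "qf_sat s v (Imp f g) = (qf_sat s v f \<longrightarrow> qf_sat s v g)"

text \<open>A universal closed formula is (up to logical equivalence) the universal
closure of a quantifier-free formula; it holds in A iff the matrix holds under
every assignment.\<close>
definition UTh :: "('f \<Rightarrow> 'a::ring_1 \<Rightarrow> 'a) \<Rightarrow> 'f qf set" where
  "UTh s = {\<phi>. \<forall>v. qf_sat s v \<phi>}"

end

theory Submission
  imports Defs "HOL-Computational_Algebra.Polynomial" "Jordan_Normal_Form.Determinant"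
begin


interpretation cpoly: semiring_hom "\<lambda>x::'f::field. [:x:]"
  by unfold_locales (auto simp: one_pCons)

lemma cpoly_add: "A \<in> carrier_mat n n \<Longrightarrow> B \<in> carrier_mat n n \<Longrightarrow>
   cpoly.mat_hom (A + B) = cpoly.mat_hom A + cpoly.mat_hom (B :: 'f::field mat)"
  by (rule eq_matI) auto

lemma cpoly_zero: "cpoly.mat_hom (0\<^sub>m n n :: 'f::field mat) = 0\<^sub>m n n"
  by (rule eq_matI) auto

lemma key_mat:
  fixes P W D :: "nat \<Rightarrow> 'f::field mat"
  assumes m: "m > 0"
    and P: "\<And>j. j < m \<Longrightarrow> P j \<in> carrier_mat k k"
    and W: "\<And>j. j < m \<Longrightarrow> W j \<in> carrier_mat k k"
    and D: "\<And>j. j \<le> m \<Longrightarrow> D j \<in> carrier_mat k k"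
    and D0: "D 0 = 0\<^sub>m k k"
    and DS: "\<And>j. j < m \<Longrightarrow> D (Suc j) = D j + P j"
    and Dm: "D m = 1\<^sub>m k"
    and DP: "\<And>j. j < m \<Longrightarrow> D j * P j = 0\<^sub>m k k"
    and WW: "\<And>j. j < m \<Longrightarrow> W j * W j = 1\<^sub>m k"
    and WPW: "\<And>j. j < m \<Longrightarrow> W j * P 0 * W j = P j"
  shows "m dvd k"
proof -
  define L where "L = (cpoly.mat_hom :: 'f mat \<Rightarrow> 'f poly mat)"
  define c where "c = ([:-1, 1:] :: 'f poly)"
  define Q where "Q j = 1\<^sub>m k + c \<cdot>\<^sub>m L (P j)" for j
  define R where "R j = 1\<^sub>m k + c \<cdot>\<^sub>m L (D j)" for j
  have Lc: "X \<in> carrier_mat k k \<Longrightarrow> L X \<in> carrier_mat k k" for X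
    unfolding L_def by auto
  have LP: "j < m \<Longrightarrow> L (P j) \<in> carrier_mat k k" for j using Lc P by auto
  have LD: "j \<le> m \<Longrightarrow> L (D j) \<in> carrier_mat k k" for j using Lc D by auto
  have LW: "j < m \<Longrightarrow> L (W j) \<in> carrier_mat k k" for j using Lc W by auto
  have Qc: "j < m \<Longrightarrow> Q j \<in> carrier_mat k k" for j using LP unfolding Q_def by auto
  have Rc: "j \<le> m \<Longrightarrow> R j \<in> carrier_mat k k" for j using LD unfolding R_def by auto
  have RS: "R (Suc j) = R j * Q j" if j: "j < m" for j
  proof -
    have a: "L (D j) \<in> carrier_mat k k" "L (P j) \<in> carrier_mat k k" using LD LP j by auto
    have LDP: "L (D j) * L (P j) = 0\<^sub>m k k"
      using DP[OF j] D[of j] P[OF j] j unfolding L_def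
      by (metis cpoly.mat_hom_mult cpoly_zero less_imp_le_nat)
    define X where "X = 1\<^sub>m k + c \<cdot>\<^sub>m L (D j)"
    define Y where "Y = c \<cdot>\<^sub>m L (P j)"
    have Xc: "X \<in> carrier_mat k k" and Yc: "Y \<in> carrier_mat k k"
      and cD: "c \<cdot>\<^sub>m L (D j) \<in> carrier_mat k k"
      using a unfolding X_def Y_def by auto
    have oc: "1\<^sub>m k \<in> carrier_mat k k" by simp
    have "R j * Q j = X * (1\<^sub>m k + Y)" unfolding R_def Q_def X_def Y_def ..
    also have "\<dots> = X * 1\<^sub>m k + X * Y" by (rule mult_add_distrib_mat[OF Xc oc Yc])
    also have "X * 1\<^sub>m k = X" by (rule right_mult_one_mat[OF Xc])
    also have "X * Y = 1\<^sub>m k * Y + (c \<cdot>\<^sub>m L (D j)) * Y"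
      unfolding X_def by (rule add_mult_distrib_mat[OF oc cD Yc])
    also have "1\<^sub>m k * Y = Y" using Yc by simp
    also have "(c \<cdot>\<^sub>m L (D j)) * Y = c \<cdot>\<^sub>m (c \<cdot>\<^sub>m (L (D j) * L (P j)))"
      unfolding Y_def using mult_smult_assoc_mat[OF a(1) smult_carrier_mat[OF a(2)]]
        mult_smult_distrib[OF a(1) a(2)] by simp
    also have "\<dots> = 0\<^sub>m k k" unfolding LDP by simp
    also have "Y + 0\<^sub>m k k = Y" using Yc by simp
    also have "X + Y = 1\<^sub>m k + c \<cdot>\<^sub>m (L (D j) + L (P j))"
      unfolding X_def Y_def using a
      by (simp only: add_smult_distrib_left_mat[OF a(1) a(2)] assoc_add_mat[OF oc smult_carrier_mat[OF a(1)] smult_carrier_mat[OF a(2)]])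
    also have "\<dots> = R (Suc j)" unfolding R_def DS[OF j] L_def
      using D[of j] P[OF j] j by (simp add: cpoly_add)
    finally show ?thesis by simp
  qed
  have QJ: "det (Q j) = det (Q 0)" if j: "j < m" for j
  proof -
    have a: "L (W j) \<in> carrier_mat k k" "L (P 0) \<in> carrier_mat k k" using LW LP j m by auto
    have Wj: "W j \<in> carrier_mat k k" using W j by auto
    have P0: "P 0 \<in> carrier_mat k k" using P m by auto
    have "L (W j * W j) = L (W j) * L (W j)" unfolding L_def by (rule cpoly.mat_hom_mult[OF Wj Wj])
    hence e1: "L (W j) * L (W j) = 1\<^sub>m k" unfolding WW[OF j] L_def cpoly.mat_hom_one by simp
    have "L (W j * P 0 * W j) = L (W j * P 0) * L (W j)" unfolding L_def
      by (rule cpoly.mat_hom_mult[OF mult_carrier_mat[OF Wj P0] Wj])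
    also have "L (W j * P 0) = L (W j) * L (P 0)" unfolding L_def by (rule cpoly.mat_hom_mult[OF Wj P0])
    finally have e2: "L (W j) * L (P 0) * L (W j) = L (P j)" unfolding WPW[OF j] by simp
    have "L (W j) * Q 0 * L (W j) = Q j"
    proof -
      have LWP: "L (W j) * L (P 0) \<in> carrier_mat k k" using a by simp
      have "L (W j) * Q 0 = L (W j) * 1\<^sub>m k + L (W j) * (c \<cdot>\<^sub>m L (P 0))"
        unfolding Q_def by (rule mult_add_distrib_mat[OF a(1) one_carrier_mat smult_carrier_mat[OF a(2)]])
      also have "\<dots> = L (W j) + c \<cdot>\<^sub>m (L (W j) * L (P 0))"
        by (simp only: right_mult_one_mat[OF a(1)] mult_smult_distrib[OF a(1) a(2)])
      finally have "L (W j) * Q 0 * L (W j) = (L (W j) + c \<cdot>\<^sub>m (L (W j) * L (P 0))) * L (W j)"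
        by simp
      also have "\<dots> = L (W j) * L (W j) + (c \<cdot>\<^sub>m (L (W j) * L (P 0))) * L (W j)"
        by (rule add_mult_distrib_mat[OF a(1) smult_carrier_mat[OF LWP] a(1)])
      also have "\<dots> = L (W j) * L (W j) + c \<cdot>\<^sub>m (L (W j) * L (P 0) * L (W j))"
        by (simp only: mult_smult_assoc_mat[OF LWP a(1)])
      also have "\<dots> = Q j" unfolding e1 e2 Q_def ..
      finally show ?thesis .
    qed
    hence "det (Q j) = det (L (W j)) * det (Q 0) * det (L (W j))"
      using det_mult[OF mult_carrier_mat[OF a(1) Qc[OF m]] a(1)] det_mult[OF a(1) Qc[OF m]] by metis
    also have "\<dots> = det (L (W j) * L (W j)) * det (Q 0)"
      unfolding det_mult[OF a(1) a(1)] by (simp only: ac_simps)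
    finally show ?thesis unfolding e1 det_one by simp
  qed
  have detR: "j \<le> m \<Longrightarrow> det (R j) = det (Q 0) ^ j" for j
  proof (induction j)
    case 0
    have "R 0 = 1\<^sub>m k" unfolding R_def D0 L_def cpoly_zero by simp
    then show ?case by simp
  next
    case (Suc j)
    then have j: "j < m" by simp
    have "det (R (Suc j)) = det (R j) * det (Q j)" unfolding RS[OF j]
      using Rc[of j] Qc[OF j] j det_mult by auto
    then show ?case using Suc QJ[OF j] by simp
  qed
  have c1: "1 + c = [:0, 1:]" unfolding c_def
    by (rule poly_eqI) (simp add: coeff_pCons split: nat.split)
  have "R m = [:0, 1:] \<cdot>\<^sub>m 1\<^sub>m k" unfolding R_def Dm L_def cpoly.mat_hom_one
    by (rule eq_matI) (auto simp: c1)
  hence "det (R m) = [:0, 1:] ^ k" by (simp only: det_smult det_one index_one_mat mult_1_right)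
  hence eq: "[:0, 1:] ^ k = det (Q 0) ^ m" using detR[of m] by simp
  have "det (Q 0) \<noteq> 0"
  proof
    assume "det (Q 0) = 0"
    hence "([:0, 1:] :: 'f poly) ^ k = 0" using eq m by simp
    thus False by (metis pCons_eq_0_iff power_eq_0_iff zero_neq_one)
  qed
  hence "degree (([:0, 1:] :: 'f poly) ^ k) = m * degree (det (Q 0))"
    using eq degree_power_eq by metis
  moreover have "degree (([:0, 1:] :: 'f poly) ^ k) = k"
    by (subst degree_power_eq) auto
  ultimately show ?thesis by (metis dvd_triv_left)
qed



definition munits :: "nat \<Rightarrow> (nat \<Rightarrow> nat \<Rightarrow> 'a::ring_1) \<Rightarrow> bool" where
  "munits n e \<longleftrightarrow> (\<forall>i<n. \<forall>j<n. \<forall>k<n. \<forall>l<n. e i j * e k l = (if j = k then e i l else 0))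
     \<and> (\<Sum>i<n. e i i) = 1"

definition emb :: "('f::field \<Rightarrow> 'a::ring_1 \<Rightarrow> 'a) \<Rightarrow> nat \<Rightarrow> ('f mat \<Rightarrow> 'a) \<Rightarrow> bool" where
  "emb smul n \<phi> \<longleftrightarrow> inj_on \<phi> (carrier_mat n n) \<and>
     (\<forall>M\<in>carrier_mat n n. \<forall>N\<in>carrier_mat n n. \<phi> (M + N) = \<phi> M + \<phi> N \<and> \<phi> (M * N) = \<phi> M * \<phi> N) \<and>
     (\<forall>c. \<forall>M\<in>carrier_mat n n. \<phi> (c \<cdot>\<^sub>m M) = smul c (\<phi> M)) \<and> \<phi> (1\<^sub>m n) = 1"

lemma ua_module: "unital_algebra smul \<Longrightarrow> Modules.module smul"
  unfolding unital_algebra_def by auto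

lemma ua_vs: "unital_algebra smul \<Longrightarrow> vector_space smul"
  unfolding unital_algebra_def vector_space_def Modules.module_def by auto

lemma ua_mult: assumes "unital_algebra smul"
  shows "smul a x * smul b y = smul (a * b) (x * y)"
proof -
  interpret Modules.module smul using assms by (rule ua_module)
  have h1: "\<And>c x y. smul c (x * y) = smul c x * y"
    using assms unfolding unital_algebra_def by blast
  have h2: "\<And>c x y. smul c (x * y) = x * smul c y"
    using assms unfolding unital_algebra_def by blast
  have "smul a x * smul b y = smul a (x * smul b y)" using h1 by metis
  also have "\<dots> = smul a (smul b (x * y))" using h2 by metis
  finally show ?thesis by simp
qed

lemma sum2_single: fixes f :: "nat \<Rightarrow> nat \<Rightarrow> 'a::comm_monoid_add"
  shows "a < n \<Longrightarrow> b < n \<Longrightarrow> (\<Sum>i<n. \<Sum>j<n. if i = a \<and> j = b then f i j else 0) = f a b"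
proof -
  assume a: "a < n" and b: "b < n"
  have "(\<Sum>i<n. \<Sum>j<n. if i = a \<and> j = b then f i j else 0) = (\<Sum>i<n. if i = a then (\<Sum>j<n. if j = b then f i j else 0) else 0)"
    by (rule sum.cong[OF refl]) auto
  also have "\<dots> = f a b" using a b by simp
  finally show ?thesis .
qed

lemma ua_l: "unital_algebra smul \<Longrightarrow> x * smul c y = smul c (x * y)"
  unfolding unital_algebra_def by metis

lemma ua_r: "unital_algebra smul \<Longrightarrow> smul c x * y = smul c (x * y)"
  unfolding unital_algebra_def by metis

lemma munits_nz:
  assumes mu: "munits n e" and a: "a < n" and b: "b < n"
  shows "e a b \<noteq> 0"
proof
  assume z: "e a b = 0"
  have E: "\<And>i j k l. i<n \<Longrightarrow> j<n \<Longrightarrow> k<n \<Longrightarrow> l<n \<Longrightarrow> e i j * e k l = (if j = k then e i l else 0)"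
    using mu unfolding munits_def by blast
  have "e a a = e a b * e b a" using E[OF a b b a] by simp
  hence aa: "e a a = 0" using z by simp
  have "e i i = 0" if i: "i < n" for i
  proof -
    have "e i i = e i a * e a i" using E[OF i a a i] by simp
    also have "e i a = e i a * e a a" using E[OF i a a a] by simp
    finally show ?thesis using aa by simp
  qed
  hence "(\<Sum>i<n. e i i) = 0" by simp
  thus False using mu unfolding munits_def by simp
qed

lemma munits_emb:
  assumes ua: "unital_algebra smul" and mu: "munits n e"
  shows "emb smul n (\<lambda>M. \<Sum>i<n. \<Sum>j<n. smul (M $$ (i, j)) (e i j))"
proof -
  interpret Modules.module smul using ua by (rule ua_module)
  interpret vs: vector_space smul using ua by (rule ua_vs)
  have E: "\<And>i j k l. i<n \<Longrightarrow> j<n \<Longrightarrow> k<n \<Longrightarrow> l<n \<Longrightarrow> e i j * e k l = (if j = k then e i l else 0)"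
    using mu unfolding munits_def by blast
  have S: "(\<Sum>i<n. e i i) = 1" using mu unfolding munits_def by blast
  define \<phi> where "\<phi> M = (\<Sum>i<n. \<Sum>j<n. smul (M $$ (i, j)) (e i j))" for M :: "'a mat"
  have add: "\<phi> (M + N) = \<phi> M + \<phi> N" if "M \<in> carrier_mat n n" "N \<in> carrier_mat n n" for M N
    unfolding \<phi>_def using that by (simp add: scale_left_distrib sum.distrib)
  have sm: "\<phi> (c \<cdot>\<^sub>m M) = smul c (\<phi> M)" if "M \<in> carrier_mat n n" for c M
    unfolding \<phi>_def using that by (simp add: scale_sum_right)
  have one: "\<phi> (1\<^sub>m n) = 1"
  proof -
    have "\<phi> (1\<^sub>m n) = (\<Sum>i<n. \<Sum>j<n. if i = j then e i j else 0)"
      unfolding \<phi>_def by (intro sum.cong refl) auto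
    also have "\<dots> = (\<Sum>i<n. e i i)" by (simp add: sum.delta)
    finally show ?thesis using S by simp
  qed
  have mult: "\<phi> (M * N) = \<phi> M * \<phi> N" if M: "M \<in> carrier_mat n n" and N: "N \<in> carrier_mat n n" for M N
  proof -
    have "\<phi> M * \<phi> N = (\<Sum>i<n. \<Sum>j<n. \<Sum>k<n. \<Sum>l<n. smul (M $$ (i, j)) (e i j) * smul (N $$ (k, l)) (e k l))"
      unfolding \<phi>_def unfolding sum_distrib_right unfolding sum_distrib_left ..
    also have "\<dots> = (\<Sum>i<n. \<Sum>j<n. \<Sum>k<n. \<Sum>l<n. if j = k then smul (M $$ (i, j) * N $$ (k, l)) (e i l) else 0)"
      by (intro sum.cong refl) (simp add: ua_mult[OF ua] E)
    also have "\<dots> = (\<Sum>i<n. \<Sum>j<n. \<Sum>k<n. if j = k then (\<Sum>l<n. smul (M $$ (i, j) * N $$ (k, l)) (e i l)) else 0)"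
      by (intro sum.cong refl) auto
    also have "\<dots> = (\<Sum>i<n. \<Sum>j<n. \<Sum>l<n. smul (M $$ (i, j) * N $$ (j, l)) (e i l))"
      by (rule sum.cong[OF refl], rule sum.cong[OF refl]) (simp add: sum.delta)
    also have "\<dots> = (\<Sum>i<n. \<Sum>l<n. \<Sum>j<n. smul (M $$ (i, j) * N $$ (j, l)) (e i l))"
      by (rule sum.cong[OF refl]) (rule sum.swap)
    also have "\<dots> = \<phi> (M * N)"
      unfolding \<phi>_def using M N
      by (intro sum.cong refl) (simp add: scalar_prod_def scale_sum_left atLeast0LessThan)
    finally show ?thesis by simp
  qed
  have sand: "e a a * \<phi> M * e b b = smul (M $$ (a, b)) (e a b)" if a: "a < n" and b: "b < n" for a b M
  proof -
    have "e a a * \<phi> M * e b b = (\<Sum>i<n. \<Sum>j<n. smul (M $$ (i, j)) (e a a * e i j * e b b))"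
      unfolding \<phi>_def sum_distrib_right sum_distrib_left
      by (simp only: ua_l[OF ua] ua_r[OF ua] mult.assoc)
    also have "\<dots> = (\<Sum>i<n. \<Sum>j<n. if i = a \<and> j = b then smul (M $$ (i, j)) (e a b) else 0)"
      by (intro sum.cong refl) (auto simp: E a b)
    also have "\<dots> = smul (M $$ (a, b)) (e a b)" by (rule sum2_single[OF a b])
    finally show ?thesis .
  qed
  have inj: "inj_on \<phi> (carrier_mat n n)"
  proof (rule inj_onI)
    fix M N assume M: "M \<in> carrier_mat n n" and N: "N \<in> carrier_mat n n" and eq: "\<phi> M = \<phi> N"
    show "M = N"
    proof (rule eq_matI)
      fix a b assume a: "a < dim_row N" and b: "b < dim_col N"
      hence a': "a < n" and b': "b < n" using N by auto
      have "smul (M $$ (a, b)) (e a b) = smul (N $$ (a, b)) (e a b)"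
        using sand[OF a' b', of M] sand[OF a' b', of N] eq by metis
      thus "M $$ (a, b) = N $$ (a, b)" using munits_nz[OF mu a' b'] vs.scale_cancel_right by blast
    qed (use M N in auto)
  qed
  show ?thesis unfolding emb_def \<phi>_def[symmetric] using inj add mult sm one by blast
qed



lemma emb_zero: assumes "emb smul n \<phi>" shows "\<phi> (0\<^sub>m n n) = 0"
proof -
  have "\<phi> (0\<^sub>m n n + 0\<^sub>m n n) = \<phi> (0\<^sub>m n n) + \<phi> (0\<^sub>m n n)"
    using assms unfolding emb_def by (meson zero_carrier_mat)
  thus ?thesis by simp
qed

definition unitm :: "nat \<Rightarrow> nat \<Rightarrow> nat \<Rightarrow> 'f::field mat" where
  "unitm n i j = mat n n (\<lambda>(a, b). if a = i \<and> b = j then 1 else 0)"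

lemma unitm_carrier[simp]: "unitm n i j \<in> carrier_mat n n"
  unfolding unitm_def by simp

lemma unitm_mult:
  assumes "i < n" "j < n" "k < n" "l < n"
  shows "unitm n i j * unitm n k l = (if j = k then unitm n i l else (0\<^sub>m n n :: 'f::field mat))"
proof (rule eq_matI)
  fix a b assume a: "a < dim_row (if j = k then unitm n i l else (0\<^sub>m n n :: 'f mat))"
    and b: "b < dim_col (if j = k then unitm n i l else (0\<^sub>m n n :: 'f mat))"
  hence a': "a < n" and b': "b < n" by (auto simp: unitm_def split: if_splits)
  have "(unitm n i j * unitm n k l :: 'f mat) $$ (a, b)
      = (\<Sum>c\<in>{0..<n}. (if a = i \<and> c = j then 1 else 0) * (if c = k \<and> b = l then 1 else 0))"
    using a' b' by (simp add: unitm_def scalar_prod_def)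
  also have "\<dots> = (\<Sum>c\<in>{0..<n}. if c = j then (if a = i \<and> j = k \<and> b = l then 1 else 0) else 0)"
    by (rule sum.cong) auto
  also have "\<dots> = (if a = i \<and> j = k \<and> b = l then 1 else 0)" using assms by simp
  also have "\<dots> = (if j = k then unitm n i l else (0\<^sub>m n n :: 'f mat)) $$ (a, b)"
    using a' b' by (simp add: unitm_def)
  finally show "(unitm n i j * unitm n k l :: 'f mat) $$ (a, b) = (if j = k then unitm n i l else (0\<^sub>m n n :: 'f mat)) $$ (a, b)" .
qed (auto simp: unitm_def)

definition dgm :: "nat \<Rightarrow> nat \<Rightarrow> 'f::field mat" where
  "dgm n m = mat n n (\<lambda>(a, b). if a = b \<and> a < m then 1 else 0)"

lemma dgm_carrier[simp]: "dgm n m \<in> carrier_mat n n" unfolding dgm_def by simp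
lemma dgm_0: "dgm n 0 = 0\<^sub>m n n" unfolding dgm_def by (rule eq_matI) auto
lemma dgm_Suc: "dgm n (Suc m) = dgm n m + unitm n m m" unfolding dgm_def unitm_def by (rule eq_matI) auto
lemma dgm_n: "dgm n n = 1\<^sub>m n" unfolding dgm_def by (rule eq_matI) auto

lemma emb_munits: assumes em: "emb smul n \<phi>"
  shows "munits n (\<lambda>i j. \<phi> (unitm n i j))"
proof -
  have add: "\<And>M N. M \<in> carrier_mat n n \<Longrightarrow> N \<in> carrier_mat n n \<Longrightarrow> \<phi> (M + N) = \<phi> M + \<phi> N"
    and mul: "\<And>M N. M \<in> carrier_mat n n \<Longrightarrow> N \<in> carrier_mat n n \<Longrightarrow> \<phi> (M * N) = \<phi> M * \<phi> N"
    and one: "\<phi> (1\<^sub>m n) = 1" using em unfolding emb_def by blast+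
  have prod: "\<phi> (unitm n i j) * \<phi> (unitm n k l) = (if j = k then \<phi> (unitm n i l) else 0)"
    if "i < n" "j < n" "k < n" "l < n" for i j k l
  proof -
    have "\<phi> (unitm n i j) * \<phi> (unitm n k l) = \<phi> (unitm n i j * unitm n k l)"
      using mul[OF unitm_carrier unitm_carrier, of i j k l] by simp
    also have "\<dots> = \<phi> (if j = k then unitm n i l else 0\<^sub>m n n)" by (simp only: unitm_mult[OF that])
    finally show ?thesis using emb_zero[OF em] by simp
  qed
  have "m \<le> n \<Longrightarrow> (\<Sum>i<m. \<phi> (unitm n i i)) = \<phi> (dgm n m)" for m
  proof (induction m)
    case 0 thus ?case by (simp add: dgm_0 emb_zero[OF em])
  next
    case (Suc m) thus ?case by (simp add: dgm_Suc add)
  qed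
  from this[of n] have "(\<Sum>i<n. \<phi> (unitm n i i)) = 1" by (simp add: dgm_n one)
  thus ?thesis unfolding munits_def using prod by blast
qed

lemma munits_pos: "munits n e \<Longrightarrow> n > 0"
  unfolding munits_def by (cases n) auto

lemma subalg_emb: assumes "matrix_subalg smul n B"
  shows "\<exists>\<phi>. emb smul n \<phi> \<and> \<phi> ` carrier_mat n n = B"
  using assms unfolding matrix_subalg_def emb_def bij_betw_def by blast

lemma emb_subalg: fixes smul :: "'f::field \<Rightarrow> 'a::ring_1 \<Rightarrow> 'a"
  assumes em: "emb smul n \<phi>" and n: "n > 0"
  shows "matrix_subalg smul n (\<phi> ` carrier_mat n n)"
proof -
  have add: "\<And>M N. M \<in> carrier_mat n n \<Longrightarrow> N \<in> carrier_mat n n \<Longrightarrow> \<phi> (M + N) = \<phi> M + \<phi> N"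
    and mul: "\<And>M N. M \<in> carrier_mat n n \<Longrightarrow> N \<in> carrier_mat n n \<Longrightarrow> \<phi> (M * N) = \<phi> M * \<phi> N"
    and sm: "\<And>c M. M \<in> carrier_mat n n \<Longrightarrow> \<phi> (c \<cdot>\<^sub>m M) = smul c (\<phi> M)"
    and one: "\<phi> (1\<^sub>m n) = 1" and inj: "inj_on \<phi> (carrier_mat n n)" using em unfolding emb_def by blast+
  let ?B = "\<phi> ` carrier_mat n n"
  have "1 \<in> ?B" using one one_carrier_mat by (metis image_eqI)
  moreover have "0 \<in> ?B" using emb_zero[OF em] zero_carrier_mat by (metis image_eqI)
  moreover have "\<forall>x\<in>?B. \<forall>y\<in>?B. x + y \<in> ?B \<and> x * y \<in> ?B"
  proof (intro ballI)
    fix x y assume "x \<in> ?B" "y \<in> ?B"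
    then obtain M N where M: "M \<in> carrier_mat n n" "x = \<phi> M" and N: "N \<in> carrier_mat n n" "y = \<phi> N" by blast
    have "x + y = \<phi> (M + N)" using add M N by simp
    moreover have "x * y = \<phi> (M * N)" using mul M N by simp
    moreover have "M + N \<in> carrier_mat n n" "M * N \<in> carrier_mat n n" using M N by auto
    ultimately show "x + y \<in> ?B \<and> x * y \<in> ?B" by blast
  qed
  moreover have "\<forall>c. \<forall>x\<in>?B. smul c x \<in> ?B"
  proof (intro allI ballI)
    fix c x assume "x \<in> ?B"
    then obtain M where M: "M \<in> carrier_mat n n" "x = \<phi> M" by blast
    have "smul c x = \<phi> (c \<cdot>\<^sub>m M)" using sm M by simp
    moreover have "c \<cdot>\<^sub>m M \<in> carrier_mat n n" using M by auto
    ultimately show "smul c x \<in> ?B" by blast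
  qed
  moreover have "\<exists>\<psi> :: 'f mat \<Rightarrow> 'a. bij_betw \<psi> (carrier_mat n n) ?B \<and>
        (\<forall>M\<in>carrier_mat n n. \<forall>N\<in>carrier_mat n n.
            \<psi> (M + N) = \<psi> M + \<psi> N \<and> \<psi> (M * N) = \<psi> M * \<psi> N) \<and>
        (\<forall>c. \<forall>M\<in>carrier_mat n n. \<psi> (c \<cdot>\<^sub>m M) = smul c (\<psi> M)) \<and>
        \<psi> (1\<^sub>m n) = 1"
    by (rule exI[of _ \<phi>]) (use inj add mul sm one in \<open>simp add: bij_betw_def\<close>)
  moreover have "n \<ge> 1" using n by simp
  ultimately show ?thesis unfolding matrix_subalg_def by (intro conjI) assumption+
qed

lemma D_set_emb: "n \<in> D_set smul \<longleftrightarrow> n > 0 \<and> (\<exists>\<phi>. emb smul n \<phi>)"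
  unfolding D_set_def using subalg_emb emb_subalg by blast

lemma D_set_munits: fixes smul :: "'f::field \<Rightarrow> 'a::ring_1 \<Rightarrow> 'a"
  assumes ua: "unital_algebra smul"
  shows "n \<in> D_set smul \<longleftrightarrow> (\<exists>e :: nat \<Rightarrow> nat \<Rightarrow> 'a. munits n e)"
proof
  assume "n \<in> D_set smul"
  then obtain \<phi> where "emb smul n \<phi>" using D_set_emb by blast
  from emb_munits[OF this] show "\<exists>e :: nat \<Rightarrow> nat \<Rightarrow> 'a. munits n e" by blast
next
  assume "\<exists>e :: nat \<Rightarrow> nat \<Rightarrow> 'a. munits n e"
  then obtain e :: "nat \<Rightarrow> nat \<Rightarrow> 'a" where e: "munits n e" by blast
  show "n \<in> D_set smul" using munits_emb[OF ua e] munits_pos[OF e] D_set_emb by blast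
qed



fun conjl :: "'f qf list \<Rightarrow> 'f qf" where
  "conjl [] = Neg FFalse"
| "conjl (f # fs) = Conj f (conjl fs)"

fun sumt :: "'f tm list \<Rightarrow> 'f tm" where
  "sumt [] = Zero"
| "sumt (t # ts) = Add t (sumt ts)"

lemma qf_sat_conjl: "qf_sat s v (conjl fs) \<longleftrightarrow> (\<forall>f\<in>set fs. qf_sat s v f)"
  by (induction fs) auto

lemma tm_eval_sumt: "tm_eval s v (sumt ts) = sum_list (map (tm_eval s v) ts)"
  by (induction ts) auto

definition Phi :: "nat \<Rightarrow> 'f qf" where
  "Phi n = Conj (conjl [Eq (Mul (Var (i*n+j)) (Var (k*n+l))) (if j = k then Var (i*n+l) else Zero).
                   i \<leftarrow> [0..<n], j \<leftarrow> [0..<n], k \<leftarrow> [0..<n], l \<leftarrow> [0..<n]])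
               (Eq (sumt (map (\<lambda>i. Var (i*n+i)) [0..<n])) One)"

lemma sat_Phi: "qf_sat s v (Phi n) \<longleftrightarrow> munits n (\<lambda>i j. v (i*n+j))"
proof -
  have a: "qf_sat s v (conjl [Eq (Mul (Var (i*n+j)) (Var (k*n+l))) (if j = k then Var (i*n+l) else Zero).
                   i \<leftarrow> [0..<n], j \<leftarrow> [0..<n], k \<leftarrow> [0..<n], l \<leftarrow> [0..<n]])
     \<longleftrightarrow> (\<forall>i<n. \<forall>j<n. \<forall>k<n. \<forall>l<n. v (i*n+j) * v (k*n+l) = (if j = k then v (i*n+l) else 0))"
    unfolding qf_sat_conjl by (auto split: if_splits)
  have b: "tm_eval s v (sumt (map (\<lambda>i. Var (i*n+i)) [0..<n])) = (\<Sum>i<n. v (i*n+i))"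
    unfolding tm_eval_sumt by (simp add: interv_sum_list_conv_sum_set_nat atLeast0LessThan comp_def)
  show ?thesis unfolding Phi_def munits_def qf_sat.simps a b by simp
qed

lemma munits_cong: "(\<And>i j. i < n \<Longrightarrow> j < n \<Longrightarrow> e i j = e' i j) \<Longrightarrow> munits n e \<longleftrightarrow> munits n e'"
proof -
  assume h: "\<And>i j. i < n \<Longrightarrow> j < n \<Longrightarrow> e i j = e' i j"
  have "(\<Sum>i<n. e i i) = (\<Sum>i<n. e' i i)" using h by (intro sum.cong) auto
  thus ?thesis unfolding munits_def using h by simp
qed

lemma ex_Phi: fixes s :: "'f \<Rightarrow> 'a::ring_1 \<Rightarrow> 'a"
  shows "(\<exists>v. qf_sat s v (Phi n)) \<longleftrightarrow> (\<exists>e :: nat \<Rightarrow> nat \<Rightarrow> 'a::ring_1. munits n e)"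
proof
  assume "\<exists>v. qf_sat s v (Phi n)"
  then obtain v :: "nat \<Rightarrow> 'a" where "qf_sat s v (Phi n)" by blast
  thus "\<exists>e :: nat \<Rightarrow> nat \<Rightarrow> 'a. munits n e" unfolding sat_Phi by blast
next
  assume "\<exists>e :: nat \<Rightarrow> nat \<Rightarrow> 'a. munits n e"
  then obtain e :: "nat \<Rightarrow> nat \<Rightarrow> 'a" where e: "munits n e" by blast
  define v where "v x = e (x div n) (x mod n)" for x
  have "munits n (\<lambda>i j. v (i*n+j))"
    using e by (subst munits_cong[of n _ e]) (auto simp: v_def)
  thus "\<exists>v. qf_sat s v (Phi n)" unfolding sat_Phi by blast
qed

lemma D_Phi: fixes smul :: "'f::field \<Rightarrow> 'a::ring_1 \<Rightarrow> 'a"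
  assumes ua: "unital_algebra smul"
  shows "n \<in> D_set smul \<longleftrightarrow> Neg (Phi n) \<notin> UTh smul"
  unfolding D_set_munits[OF ua] ex_Phi[of smul n, symmetric] UTh_def by simp

primrec mtm :: "nat \<Rightarrow> (nat \<Rightarrow> 'f::field mat) \<Rightarrow> 'f tm \<Rightarrow> 'f mat" where
  "mtm n u (Var i) = u i"
| "mtm n u Zero = 0\<^sub>m n n"
| "mtm n u One = 1\<^sub>m n"
| "mtm n u (Add t t') = mtm n u t + mtm n u t'"
| "mtm n u (Mul t t') = mtm n u t * mtm n u t'"
| "mtm n u (Smul c t) = c \<cdot>\<^sub>m mtm n u t"

primrec msat :: "nat \<Rightarrow> (nat \<Rightarrow> 'f::field mat) \<Rightarrow> 'f qf \<Rightarrow> bool" where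
  "msat n u (Eq t t') = (mtm n u t = mtm n u t')"
| "msat n u FFalse = False"
| "msat n u (Neg f) = (\<not> msat n u f)"
| "msat n u (Conj f g) = (msat n u f \<and> msat n u g)"
| "msat n u (Disj f g) = (msat n u f \<or> msat n u g)"
| "msat n u (Imp f g) = (msat n u f \<longrightarrow> msat n u g)"

primrec tm_vars :: "'f tm \<Rightarrow> nat set" where
  "tm_vars (Var i) = {i}"
| "tm_vars Zero = {}"
| "tm_vars One = {}"
| "tm_vars (Add t t') = tm_vars t \<union> tm_vars t'"
| "tm_vars (Mul t t') = tm_vars t \<union> tm_vars t'"
| "tm_vars (Smul c t) = tm_vars t"

primrec qf_vars :: "'f qf \<Rightarrow> nat set" where
  "qf_vars (Eq t t') = tm_vars t \<union> tm_vars t'"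
| "qf_vars FFalse = {}"
| "qf_vars (Neg f) = qf_vars f"
| "qf_vars (Conj f g) = qf_vars f \<union> qf_vars g"
| "qf_vars (Disj f g) = qf_vars f \<union> qf_vars g"
| "qf_vars (Imp f g) = qf_vars f \<union> qf_vars g"

lemma finite_tm_vars: "finite (tm_vars t)" by (induction t) auto
lemma finite_qf_vars: "finite (qf_vars f)" by (induction f) (auto simp: finite_tm_vars)

lemma tm_eval_cong: "(\<And>i. i \<in> tm_vars t \<Longrightarrow> v i = w i) \<Longrightarrow> tm_eval s v t = tm_eval s w t"
  by (induction t) auto

lemma qf_sat_cong: "(\<And>i. i \<in> qf_vars f \<Longrightarrow> v i = w i) \<Longrightarrow> qf_sat s v f = qf_sat s w f"
proof (induction f)
  case (Eq t t')
  then show ?case using tm_eval_cong[of t v w s] tm_eval_cong[of t' v w s] by auto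
qed auto

lemma emb_tm: assumes em: "emb smul n \<phi>" and u: "\<And>i. u i \<in> carrier_mat n n"
  shows "mtm n u t \<in> carrier_mat n n \<and> tm_eval smul (\<lambda>i. \<phi> (u i)) t = \<phi> (mtm n u t)"
proof (induction t)
  case (Add t t')
  then show ?case using em unfolding emb_def by auto
next
  case (Mul t t')
  then show ?case using em unfolding emb_def by auto
next
  case (Smul c t)
  then show ?case using em unfolding emb_def by auto
qed (use u em emb_zero[OF em] in \<open>auto simp: emb_def\<close>)

lemma emb_qf: assumes em: "emb smul n \<phi>" and u: "\<And>i. u i \<in> carrier_mat n n"
  shows "qf_sat smul (\<lambda>i. \<phi> (u i)) f \<longleftrightarrow> msat n u f"
proof (induction f)
  case (Eq t t')
  have inj: "inj_on \<phi> (carrier_mat n n)" using em unfolding emb_def by blast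
  show ?case using emb_tm[OF em u, where t=t] emb_tm[OF em u, where t=t'] inj_onD[OF inj] by auto
qed auto

lemma UTh_char: fixes smul :: "'f::field \<Rightarrow> 'a::ring_1 \<Rightarrow> 'a"
  assumes lm: "locally_matrix smul"
  shows "f \<in> UTh smul \<longleftrightarrow> (\<forall>n\<in>D_set smul. \<forall>u. (\<forall>i. u i \<in> carrier_mat n n) \<longrightarrow> msat n u f)"
proof
  assume f: "f \<in> UTh smul"
  show "\<forall>n\<in>D_set smul. \<forall>u. (\<forall>i. u i \<in> carrier_mat n n) \<longrightarrow> msat n u f"
  proof (intro ballI allI impI)
    fix n and u :: "nat \<Rightarrow> 'f mat" assume n: "n \<in> D_set smul" and u: "\<forall>i. u i \<in> carrier_mat n n"
    obtain \<phi> :: "'f mat \<Rightarrow> 'a" where em: "emb smul n \<phi>" using n D_set_emb by blast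
    have "qf_sat smul (\<lambda>i. \<phi> (u i)) f" using f unfolding UTh_def by blast
    thus "msat n u f" using emb_qf[OF em] u by blast
  qed
next
  assume H: "\<forall>n\<in>D_set smul. \<forall>u. (\<forall>i. u i \<in> carrier_mat n n) \<longrightarrow> msat n u f"
  show "f \<in> UTh smul" unfolding UTh_def
  proof (intro CollectI allI)
    fix v :: "nat \<Rightarrow> 'a"
    have "finite (v ` qf_vars f)" using finite_qf_vars by blast
    then obtain n B where sub: "matrix_subalg smul n B" and SB: "v ` qf_vars f \<subseteq> B"
      using lm unfolding locally_matrix_def by blast
    have n: "n \<in> D_set smul" using sub unfolding D_set_def matrix_subalg_def by auto
    obtain \<phi> :: "'f mat \<Rightarrow> 'a" where em: "emb smul n \<phi>" and im: "\<phi> ` carrier_mat n n = B"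
      using subalg_emb[OF sub] by blast
    define u where "u i = (if v i \<in> B then inv_into (carrier_mat n n) \<phi> (v i) else 0\<^sub>m n n)" for i
    have u: "u i \<in> carrier_mat n n" for i
      unfolding u_def using im by (auto intro: inv_into_into)
    have "msat n u f" using H n u by blast
    hence "qf_sat smul (\<lambda>i. \<phi> (u i)) f" using emb_qf[OF em, where u=u, OF u] by blast
    moreover have "\<phi> (u i) = v i" if "i \<in> qf_vars f" for i
    proof -
      have "v i \<in> B" using SB that by blast
      thus ?thesis unfolding u_def using im by (simp add: f_inv_into_f)
    qed
    ultimately show "qf_sat smul v f" using qf_sat_cong[of f "\<lambda>i. \<phi> (u i)" v smul] by simp
  qed
qed



lemma enat_le_ex: "(x::enat) \<le> y \<Longrightarrow> \<exists>c. y = x + c"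
  using le_iff_add by blast

lemma st_dvd_iff: assumes u: "u \<in> steinitz" and v: "v \<in> steinitz"
  shows "st_dvd v u \<longleftrightarrow> (\<forall>p. v p \<le> u p)"
proof
  assume "st_dvd v u"
  then obtain w where "u = st_mult v w" unfolding st_dvd_def by blast
  thus "\<forall>p. v p \<le> u p" unfolding st_mult_def by simp
next
  assume le: "\<forall>p. v p \<le> u p"
  hence "\<forall>p. \<exists>c. u p = v p + c" using enat_le_ex by blast
  then obtain W where W: "\<And>p. u p = v p + W p" by metis
  define w where "w p = (if prime p then W p else 0)" for p
  have "w \<in> steinitz" unfolding w_def steinitz_def by simp
  moreover have "u = st_mult v w"
  proof
    fix p show "u p = st_mult v w p"
    proof (cases "prime p")
      case True thus ?thesis using W unfolding st_mult_def w_def by simp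
    next
      case False thus ?thesis using u v unfolding st_mult_def w_def steinitz_def by simp
    qed
  qed
  ultimately show "st_dvd v u" unfolding st_dvd_def by blast
qed

lemma st_of_nat_in: "st_of_nat n \<in> steinitz"
  unfolding st_of_nat_def steinitz_def by simp

definition stU :: "nat set \<Rightarrow> nat \<Rightarrow> enat" where
  "stU S p = (if prime p then (SUP n\<in>S. enat (multiplicity p n)) else 0)"

lemma stU_in: "stU S \<in> steinitz"
  unfolding stU_def steinitz_def by simp

lemma st_lcm_eq: "st_lcm S = stU S"
proof -
  let ?P = "\<lambda>u. u \<in> steinitz \<and> (\<forall>n\<in>S. st_dvd (st_of_nat n) u) \<and>
      (\<forall>v\<in>steinitz. (\<forall>n\<in>S. st_dvd (st_of_nat n) v) \<longrightarrow> st_dvd u v)"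
  have up: "st_dvd (st_of_nat n) (stU S)" if "n \<in> S" for n
    unfolding st_dvd_iff[OF stU_in st_of_nat_in]
    using that by (auto simp: st_of_nat_def stU_def of_nat_eq_enat intro: SUP_upper)
  have least: "st_dvd (stU S) v" if v: "v \<in> steinitz" and h: "\<forall>n\<in>S. st_dvd (st_of_nat n) v" for v
  proof -
    have "\<forall>n\<in>S. \<forall>p. st_of_nat n p \<le> v p" using h st_dvd_iff[OF v st_of_nat_in] by blast
    hence "stU S p \<le> v p" for p unfolding stU_def st_of_nat_def
      by (auto intro!: SUP_least split: if_splits simp: of_nat_eq_enat)
    thus ?thesis using st_dvd_iff[OF v stU_in] by blast
  qed
  have P: "?P (stU S)" using stU_in up least by blast
  show ?thesis unfolding st_lcm_def
  proof (rule the_equality[where P="?P", OF P])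
    fix u assume Pu: "?P u"
    have "st_dvd u (stU S)" using Pu up stU_in by blast
    moreover have "st_dvd (stU S) u" using least Pu by blast
    ultimately have "\<forall>p. u p \<le> stU S p" "\<forall>p. stU S p \<le> u p"
      using st_dvd_iff[OF stU_in] st_dvd_iff[OF _ stU_in] Pu by blast+
    thus "u = stU S" using antisym by (intro ext) blast
  qed
qed

lemma enat_le_SUP_ex: assumes "enat k \<le> (SUP x\<in>X. enat (f x))" and "k > 0"
  shows "\<exists>x\<in>X. k \<le> f x"
proof (rule ccontr)
  assume "\<not> ?thesis"
  hence "\<forall>x\<in>X. enat (f x) \<le> enat (k - 1)" by auto
  hence "(SUP x\<in>X. enat (f x)) \<le> enat (k - 1)" by (intro SUP_least) blast
  with assms(1) have "enat k \<le> enat (k - 1)" by (rule order_trans)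
  with assms(2) show False by simp
qed



lemma munits_div:
  assumes mu: "munits k e" and kd: "k = d * c" and d: "d > 0"
  shows "munits d (\<lambda>a b. \<Sum>s<c. e (a*c+s) (b*c+s))"
proof -
  have E: "\<And>i j k' l. i<k \<Longrightarrow> j<k \<Longrightarrow> k'<k \<Longrightarrow> l<k \<Longrightarrow> e i j * e k' l = (if j = k' then e i l else 0)"
    using mu unfolding munits_def by blast
  have S: "(\<Sum>i<k. e i i) = 1" using mu unfolding munits_def by blast
  have idx: "a*c+s < k" if "a < d" "s < c" for a s
  proof -
    have "a*c+s < a*c + c" using that by simp
    also have "\<dots> = (a+1)*c" by simp
    also have "\<dots> \<le> d*c" using that by (intro mult_right_mono) auto
    finally show ?thesis using kd by simp
  qed
  have inj: "b*c+s = a*c+s' \<longleftrightarrow> b = a \<and> s = s'" if "s < c" "s' < c" for a b s s'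
  proof
    assume h: "b*c+s = a*c+s'"
    have "(b*c+s) div c = b" "(b*c+s) mod c = s" "(a*c+s') div c = a" "(a*c+s') mod c = s'"
      using that by auto
    thus "b = a \<and> s = s'" using h by metis
  qed auto
  define f where "f a b = (\<Sum>s<c. e (a*c+s) (b*c+s))" for a b
  have prod: "f a b * f a' b' = (if b = a' then f a b' else 0)"
    if a: "a < d" "b < d" "a' < d" "b' < d" for a b a' b'
  proof -
    have "f a b * f a' b' = (\<Sum>s<c. \<Sum>s'<c. e (a*c+s) (b*c+s) * e (a'*c+s') (b'*c+s'))"
      unfolding f_def by (rule sum_product)
    also have "\<dots> = (\<Sum>s<c. \<Sum>s'<c. if s' = s then (if b = a' then e (a*c+s) (b'*c+s) else 0) else 0)"
      by (intro sum.cong refl) (auto simp: E idx a inj)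
    also have "\<dots> = (\<Sum>s<c. if b = a' then e (a*c+s) (b'*c+s) else 0)"
      by (rule sum.cong[OF refl]) simp
    also have "\<dots> = (if b = a' then f a b' else 0)" unfolding f_def by simp
    finally show ?thesis .
  qed
  have "(\<Sum>a<d. f a a) = (\<Sum>a<d. sum (\<lambda>i. e i i) {a*c..<a*c+c})"
  proof (rule sum.cong[OF refl])
    fix a
    have "sum (\<lambda>i. e i i) {0+a*c..<c+a*c} = (\<Sum>s\<in>{0..<c}. e (s+a*c) (s+a*c))"
      by (rule sum.shift_bounds_nat_ivl)
    thus "f a a = sum (\<lambda>i. e i i) {a*c..<a*c+c}" unfolding f_def
      by (simp add: atLeast0LessThan add.commute)
  qed
  also have "\<dots> = (\<Sum>i<d*c. e i i)" by (rule sum.nat_group)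
  finally have "(\<Sum>a<d. f a a) = 1" using S kd by simp
  thus ?thesis unfolding munits_def f_def[symmetric] using prod by blast
qed

lemma key_transport:
  fixes smul :: "'f::field \<Rightarrow> 'a::ring_1 \<Rightarrow> 'a"
  assumes ua: "unital_algebra smul" and sub: "matrix_subalg smul k B"
    and mu: "munits m e" and eB: "\<And>i j. i < m \<Longrightarrow> j < m \<Longrightarrow> e i j \<in> B"
  shows "m dvd k"
proof -
  interpret Modules.module smul using ua by (rule ua_module)
  have E: "\<And>i j k l. i<m \<Longrightarrow> j<m \<Longrightarrow> k<m \<Longrightarrow> l<m \<Longrightarrow> e i j * e k l = (if j = k then e i l else 0)"
    using mu unfolding munits_def by blast
  have S: "(\<Sum>i<m. e i i) = 1" using mu unfolding munits_def by blast
  have m: "m > 0" using munits_pos[OF mu] .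
  obtain \<phi> :: "'f mat \<Rightarrow> 'a" where em: "emb smul k \<phi>" and im: "\<phi> ` carrier_mat k k = B"
    using subalg_emb[OF sub] by blast
  have add: "\<And>M N. M \<in> carrier_mat k k \<Longrightarrow> N \<in> carrier_mat k k \<Longrightarrow> \<phi> (M + N) = \<phi> M + \<phi> N"
    and mul: "\<And>M N. M \<in> carrier_mat k k \<Longrightarrow> N \<in> carrier_mat k k \<Longrightarrow> \<phi> (M * N) = \<phi> M * \<phi> N"
    and one: "\<phi> (1\<^sub>m k) = 1" and inj: "inj_on \<phi> (carrier_mat k k)" using em unfolding emb_def by blast+
  have zero: "\<phi> (0\<^sub>m k k) = 0" by (rule emb_zero[OF em])
  have Badd: "x + y \<in> B" and Bmul: "x * y \<in> B" if "x \<in> B" "y \<in> B" for x y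
    using sub that unfolding matrix_subalg_def by blast+
  have B1: "1 \<in> B" and B0: "0 \<in> B" using sub unfolding matrix_subalg_def by blast+
  have Bneg: "- x \<in> B" if "x \<in> B" for x
  proof -
    have "smul (-1) x \<in> B" using sub that unfolding matrix_subalg_def by blast
    thus ?thesis by simp
  qed
  have Bdiff: "x - y \<in> B" if "x \<in> B" "y \<in> B" for x y
    using Badd[OF that(1) Bneg[OF that(2)]] by simp
  define \<psi> where "\<psi> = inv_into (carrier_mat k k) \<phi>"
  have \<psi>c: "\<psi> x \<in> carrier_mat k k" if "x \<in> B" for x
    unfolding \<psi>_def using that im by (auto intro: inv_into_into)
  have \<phi>\<psi>: "\<phi> (\<psi> x) = x" if "x \<in> B" for x
    unfolding \<psi>_def using that im by (auto simp: f_inv_into_f)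
  have injD: "X = Y" if "X \<in> carrier_mat k k" "Y \<in> carrier_mat k k" "\<phi> X = \<phi> Y" for X Y
    using inj_onD[OF inj that(3) that(1) that(2)] .
  define sB where "sB j = (\<Sum>i<j. e i i)" for j
  have sBB: "j \<le> m \<Longrightarrow> sB j \<in> B" for j
    by (induction j) (auto simp: sB_def B0 intro!: Badd eB)
  define P where "P j = \<psi> (e j j)" for j
  define D where "D j = \<psi> (sB j)" for j
  define w where "w j = 1 - e 0 0 - e j j + e 0 j + e j 0" for j
  define W where "W j = \<psi> (w j)" for j
  have wB: "j < m \<Longrightarrow> w j \<in> B" for j
    unfolding w_def using m by (intro Badd Bdiff B1 eB) auto
  have Pc: "j < m \<Longrightarrow> P j \<in> carrier_mat k k" for j unfolding P_def using eB by (auto intro: \<psi>c)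
  have Dc: "j \<le> m \<Longrightarrow> D j \<in> carrier_mat k k" for j unfolding D_def using sBB by (auto intro: \<psi>c)
  have Wc: "j < m \<Longrightarrow> W j \<in> carrier_mat k k" for j unfolding W_def using wB by (auto intro: \<psi>c)
  have \<phi>P: "j < m \<Longrightarrow> \<phi> (P j) = e j j" for j unfolding P_def using eB by (auto intro: \<phi>\<psi>)
  have \<phi>D: "j \<le> m \<Longrightarrow> \<phi> (D j) = sB j" for j unfolding D_def using sBB by (auto intro: \<phi>\<psi>)
  have \<phi>W: "j < m \<Longrightarrow> \<phi> (W j) = w j" for j unfolding W_def using wB by (auto intro: \<phi>\<psi>)
  have D0: "D 0 = 0\<^sub>m k k"
    by (rule injD) (use Dc[of 0] \<phi>D[of 0] zero in \<open>auto simp: sB_def\<close>)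
  have DS: "D (Suc j) = D j + P j" if j: "j < m" for j
    by (rule injD) (use Dc[of "Suc j"] Dc[of j] Pc[OF j] \<phi>D[of "Suc j"] \<phi>D[of j] \<phi>P[OF j] j add in \<open>auto simp: sB_def\<close>)
  have Dm: "D m = 1\<^sub>m k"
    by (rule injD) (use Dc[of m] \<phi>D[of m] one S in \<open>auto simp: sB_def\<close>)
  have DP: "D j * P j = 0\<^sub>m k k" if j: "j < m" for j
  proof (rule injD)
    show "D j * P j \<in> carrier_mat k k" using Dc[of j] Pc[OF j] j by auto
    have "sB j * e j j = (\<Sum>i<j. e i i * e j j)" unfolding sB_def by (rule sum_distrib_right)
    also have "\<dots> = 0" using j by (intro sum.neutral) (auto simp: E)
    finally show "\<phi> (D j * P j) = \<phi> (0\<^sub>m k k)"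
      using mul[OF Dc[of j] Pc[OF j]] \<phi>D[of j] \<phi>P[OF j] j zero by simp
  qed simp
  have ww: "w j * w j = 1" if j: "j < m" for j
  proof (cases "j = 0")
    case True thus ?thesis unfolding w_def by simp
  next
    case False
    have m0: "0 < m" using m .
    note EE = E[OF m0 m0 m0 m0] E[OF m0 m0 m0 j] E[OF m0 m0 j m0] E[OF m0 m0 j j]
      E[OF m0 j m0 m0] E[OF m0 j m0 j] E[OF m0 j j m0] E[OF m0 j j j]
      E[OF j m0 m0 m0] E[OF j m0 m0 j] E[OF j m0 j m0] E[OF j m0 j j]
      E[OF j j m0 m0] E[OF j j m0 j] E[OF j j j m0] E[OF j j j j]
    show ?thesis unfolding w_def using False by (simp add: algebra_simps EE)
  qed
  have wpw: "w j * e 0 0 * w j = e j j" if j: "j < m" for j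
  proof (cases "j = 0")
    case True thus ?thesis unfolding w_def using E[OF m m m m] by simp
  next
    case False
    have m0: "0 < m" using m .
    note EE = E[OF m0 m0 m0 m0] E[OF m0 m0 m0 j] E[OF m0 m0 j m0] E[OF m0 m0 j j]
      E[OF m0 j m0 m0] E[OF m0 j m0 j] E[OF m0 j j m0] E[OF m0 j j j]
      E[OF j m0 m0 m0] E[OF j m0 m0 j] E[OF j m0 j m0] E[OF j m0 j j]
      E[OF j j m0 m0] E[OF j j m0 j] E[OF j j j m0] E[OF j j j j]
    show ?thesis unfolding w_def using False by (simp add: algebra_simps EE)
  qed
  have WW: "W j * W j = 1\<^sub>m k" if j: "j < m" for j
    by (rule injD) (use Wc[OF j] mul[OF Wc[OF j] Wc[OF j]] \<phi>W[OF j] ww[OF j] one in auto)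
  have WPW: "W j * P 0 * W j = P j" if j: "j < m" for j
  proof (rule injD)
    show "W j * P 0 * W j \<in> carrier_mat k k" using Wc[OF j] Pc[OF m] by auto
    show "P j \<in> carrier_mat k k" using Pc[OF j] .
    have "\<phi> (W j * P 0 * W j) = \<phi> (W j * P 0) * \<phi> (W j)"
      using mul Wc[OF j] Pc[OF m] by (meson mult_carrier_mat)
    also have "\<dots> = w j * e 0 0 * w j" using mul[OF Wc[OF j] Pc[OF m]] \<phi>W[OF j] \<phi>P[OF m] by simp
    finally show "\<phi> (W j * P 0 * W j) = \<phi> (P j)" using wpw[OF j] \<phi>P[OF j] by simp
  qed
  show ?thesis
    by (rule key_mat[of m P k W D]) (use m Pc Wc Dc D0 DS Dm DP WW WPW in auto)
qed



lemma one_in_D: fixes smul :: "'f::field \<Rightarrow> 'a::ring_1 \<Rightarrow> 'a"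
  assumes ua: "unital_algebra smul" shows "1 \<in> D_set smul"
proof -
  have "munits 1 (\<lambda>i j. 1 :: 'a)" unfolding munits_def by simp
  thus ?thesis using D_set_munits[OF ua] by blast
qed

lemma D_pos: "n \<in> D_set smul \<Longrightarrow> n > 0" unfolding D_set_def by blast

lemma D_divisor: fixes smul :: "'f::field \<Rightarrow> 'a::ring_1 \<Rightarrow> 'a"
  assumes ua: "unital_algebra smul" and k: "k \<in> D_set smul" and dk: "d dvd k" and d: "d > 0"
  shows "d \<in> D_set smul"
proof -
  obtain e :: "nat \<Rightarrow> nat \<Rightarrow> 'a" where e: "munits k e" using k D_set_munits[OF ua] by blast
  obtain c where kd: "k = d * c" using dk by blast
  have "munits d (\<lambda>a b. \<Sum>s<c. e (a*c+s) (b*c+s))" by (rule munits_div[OF e kd d])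
  thus ?thesis using D_set_munits[OF ua] by blast
qed

lemma D_directed: fixes smul :: "'f::field \<Rightarrow> 'a::ring_1 \<Rightarrow> 'a"
  assumes lm: "locally_matrix smul" and m1: "m1 \<in> D_set smul" and m2: "m2 \<in> D_set smul"
  shows "\<exists>k\<in>D_set smul. m1 dvd k \<and> m2 dvd k"
proof -
  have ua: "unital_algebra smul" using lm unfolding locally_matrix_def by blast
  obtain e1 :: "nat \<Rightarrow> nat \<Rightarrow> 'a" where e1: "munits m1 e1" using m1 D_set_munits[OF ua] by blast
  obtain e2 :: "nat \<Rightarrow> nat \<Rightarrow> 'a" where e2: "munits m2 e2" using m2 D_set_munits[OF ua] by blast
  let ?S = "(\<lambda>(i, j). e1 i j) ` ({..<m1} \<times> {..<m1}) \<union> (\<lambda>(i, j). e2 i j) ` ({..<m2} \<times> {..<m2})"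
  have fin: "finite ?S" by simp
  have "\<forall>S. finite S \<longrightarrow> (\<exists>n B. matrix_subalg smul n B \<and> S \<subseteq> B)"
    using lm unfolding locally_matrix_def by blast
  from this[rule_format, OF fin] obtain k B where sub: "matrix_subalg smul k B" and SB: "?S \<subseteq> B"
    by blast
  have k: "k \<in> D_set smul" using sub unfolding D_set_def matrix_subalg_def by auto
  have "m1 dvd k" by (rule key_transport[OF ua sub e1]) (use SB in auto)
  moreover have "m2 dvd k" by (rule key_transport[OF ua sub e2]) (use SB in auto)
  ultimately show ?thesis using k by blast
qed

lemma D_finite_common:
  fixes smul :: "'f::field \<Rightarrow> 'a::ring_1 \<Rightarrow> 'a"
  assumes lm: "locally_matrix smul" and P: "finite P"
    and H: "\<forall>p\<in>P. \<exists>m\<in>D_set smul. multiplicity p n \<le> multiplicity p m"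
  shows "\<exists>k\<in>D_set smul. \<forall>p\<in>P. multiplicity p n \<le> multiplicity p k"
  using P H
proof (induction P rule: finite_induct)
  case empty
  have ua: "unital_algebra smul" using lm unfolding locally_matrix_def by blast
  show ?case using one_in_D[OF ua] by blast
next
  case (insert p P)
  obtain k1 where k1: "k1 \<in> D_set smul" "\<forall>q\<in>P. multiplicity q n \<le> multiplicity q k1"
    using insert by blast
  obtain mp where mp: "mp \<in> D_set smul" "multiplicity p n \<le> multiplicity p mp"
    using insert by blast
  obtain k where k: "k \<in> D_set smul" "k1 dvd k" "mp dvd k" using D_directed[OF lm k1(1) mp(1)] by blast
  have k0: "k \<noteq> 0" using D_pos[OF k(1)] by simp
  have "\<forall>q\<in>insert p P. multiplicity q n \<le> multiplicity q k"
  proof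
    fix q assume "q \<in> insert p P"
    then show "multiplicity q n \<le> multiplicity q k"
    proof
      assume "q = p"
      thus ?thesis using mp(2) dvd_imp_multiplicity_le[OF k(3) k0, of p] by simp
    next
      assume "q \<in> P"
      thus ?thesis using k1(2) dvd_imp_multiplicity_le[OF k(2) k0, of q] by fastforce
    qed
  qed
  thus ?case using k(1) by blast
qed

lemma D_char: fixes smul :: "'f::field \<Rightarrow> 'a::ring_1 \<Rightarrow> 'a"
  assumes lm: "locally_matrix smul"
  shows "D_set smul = {n. n > 0 \<and> st_dvd (st_of_nat n) (steinitz_n smul)}"
proof -
  have ua: "unital_algebra smul" using lm unfolding locally_matrix_def by blast
  have sn: "steinitz_n smul = stU (D_set smul)" unfolding steinitz_n_def st_lcm_eq ..
  show ?thesis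
  proof (intro equalityI subsetI)
    fix n assume n: "n \<in> D_set smul"
    have "n > 0" using D_pos[OF n] .
    moreover have "st_dvd (st_of_nat n) (steinitz_n smul)" unfolding sn st_dvd_iff[OF stU_in st_of_nat_in]
      using n by (auto simp: st_of_nat_def stU_def of_nat_eq_enat intro: SUP_upper)
    ultimately show "n \<in> {n. n > 0 \<and> st_dvd (st_of_nat n) (steinitz_n smul)}" by blast
  next
    fix n assume "n \<in> {n. n > 0 \<and> st_dvd (st_of_nat n) (steinitz_n smul)}"
    hence n0: "n > 0" and dv0: "st_dvd (st_of_nat n) (stU (D_set smul))"
      unfolding sn by blast+
    have dv: "\<forall>p. st_of_nat n p \<le> stU (D_set smul) p"
      using dv0 st_dvd_iff[OF stU_in st_of_nat_in] by blast
    have wit: "\<forall>p\<in>prime_factors n. \<exists>m\<in>D_set smul. multiplicity p n \<le> multiplicity p m"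
    proof
      fix p assume p: "p \<in> prime_factors n"
      hence pp: "prime p" by auto
      have pos: "multiplicity p n > 0" using p n0 by (simp add: prime_factors_multiplicity)
      have "enat (multiplicity p n) \<le> (SUP m\<in>D_set smul. enat (multiplicity p m))"
        using dv[rule_format, of p] pp by (simp add: st_of_nat_def stU_def of_nat_eq_enat)
      thus "\<exists>m\<in>D_set smul. multiplicity p n \<le> multiplicity p m"
        using enat_le_SUP_ex[OF _ pos] by blast
    qed
    have fin: "finite (prime_factors n)" by simp
    from D_finite_common[OF lm fin wit] obtain k where
      k: "k \<in> D_set smul" "\<forall>p\<in>prime_factors n. multiplicity p n \<le> multiplicity p k"
      by blast
    have "n dvd k"
    proof (rule multiplicity_le_imp_dvd)
      show "n \<noteq> 0" using n0 by simp
      fix p :: nat assume pp: "prime p"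
      show "multiplicity p n \<le> multiplicity p k"
      proof (cases "p \<in> prime_factors n")
        case True thus ?thesis using k(2) by blast
      next
        case False
        hence "\<not> p dvd n" using pp n0 by (auto simp: in_prime_factors_iff)
        hence "multiplicity p n = 0" by (rule not_dvd_imp_multiplicity_0)
        thus ?thesis by simp
      qed
    qed
    thus "n \<in> D_set smul" using D_divisor[OF ua k(1) _ n0] by blast
  qed
qed

theorem theorem3:
  fixes smulA :: "'f::field \<Rightarrow> 'a::ring_1 \<Rightarrow> 'a"
    and smulB :: "'f \<Rightarrow> 'b::ring_1 \<Rightarrow> 'b"
  assumes "locally_matrix smulA" and "locally_matrix smulB"
  shows "UTh smulA = UTh smulB \<longleftrightarrow> steinitz_n smulA = steinitz_n smulB"
proof
  assume U: "UTh smulA = UTh smulB"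
  have uaA: "unital_algebra smulA" using assms(1) unfolding locally_matrix_def by blast
  have uaB: "unital_algebra smulB" using assms(2) unfolding locally_matrix_def by blast
  have "D_set smulA = D_set smulB"
    using D_Phi[OF uaA] D_Phi[OF uaB] U by blast
  thus "steinitz_n smulA = steinitz_n smulB" unfolding steinitz_n_def by simp
next
  assume S: "steinitz_n smulA = steinitz_n smulB"
  have D: "D_set smulA = D_set smulB" using D_char[OF assms(1)] D_char[OF assms(2)] S by simp
  have "f \<in> UTh smulA \<longleftrightarrow> f \<in> UTh smulB" for f
    by (simp only: UTh_char[OF assms(1)] UTh_char[OF assms(2)] D)
  thus "UTh smulA = UTh smulB" by blast
qed

end
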